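(* Let $J=p\ge1$, $\sigma_\varepsilon^2>0$, $\sigma_\gamma^2>0$, $0\le\rho\le1$, and let $\mathbf{\Sigma}_\gamma$ be the autoregressive covariance matrix with entries $(\mathbf{\Sigma}_\gamma)_{jj'}=\sigma_\gamma^2\rho^{|j-j'|}$. Let $\mathbf{A}_{\bm\beta}$ be a nonsingular $J\times J$ matrix and $I>0$. For an approximate design $\xi=(I_1,\dots,I_J)$ (reals $I_j\ge0$ with $\sum_jI_j=I$) let $$\mathbf{M}_{\bm\beta}(\xi)=\mathbf{A}_{\bm\beta}^{\mathrm T}\mathbf{M}_0(\xi)^{1/2}\big(\sigma_\varepsilon^2\mathbf{I}_J+\mathbf{M}_0(\xi)^{1/2}\mathbf{\Sigma}_\gamma\mathbf{M}_0(\xi)^{1/2}\big)^{-1}\mathbf{M}_0(\xi)^{1/2}\mathbf{A}_{\bm\beta},\quad \mathbf{M}_0(\xi)^{1/2}=\mathrm{diag}(\sqrt{I_1},\dots,\sqrt{I_J}).$$ Then the $D$-optimal approximate design $\xi^*=(I_1^*,\dots,I_J^* )$ is symmetric in time, i.e. $I_j^*=I_{J-j+1}^*$ for all $j=1,\dots,J$.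
   Context: $\mathbf{A}_{\bm\beta}$ is the Jacobian of the mean response curve at a fixed parameter $\bm\beta$. $\bm\beta$ is estimable under $\xi$ if $\mathbf{A}_{\bm\beta}$ has full column rank and its columns lie in the column space of $\mathrm{diag}(I_1,\dots,I_J)$. A design $\xi^*$ is $D$-optimal if $\log\det\mathbf{M}_{\bm\beta}(\xi^* )\ge\log\det\mathbf{M}_{\bm\beta}(\xi)$ for all approximate designs $\xi$ with total $I$ under which $\bm\beta$ is estimable. *)

theory Defs
  imports "Jordan_Normal_Form.Determinant" "Jordan_Normal_Form.Gauss_Jordan_Elimination"
begin

text \<open>Indices are 0-based: j = 0..J-1 corresponds to the paper's j = 1..J.\<close>

definition ar_cov :: "nat \<Rightarrow> real \<Rightarrow> real \<Rightarrow> real mat" where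
  "ar_cov J sg2 rho = mat J J (\<lambda>(i, j). sg2 * rho ^ (if i \<le> j then j - i else i - j))"

definition M0_half :: "nat \<Rightarrow> (nat \<Rightarrow> real) \<Rightarrow> real mat" where
  "M0_half J xi = mat J J (\<lambda>(i, j). if i = j then sqrt (xi i) else 0)"

definition diag_design :: "nat \<Rightarrow> (nat \<Rightarrow> real) \<Rightarrow> real mat" where
  "diag_design J xi = mat J J (\<lambda>(i, j). if i = j then xi i else 0)"

text \<open>Matrix inverse (the matrices inverted below are invertible).\<close>
definition minv :: "real mat \<Rightarrow> real mat" where
  "minv B = the (mat_inverse B)"

definition info_mat :: "nat \<Rightarrow> real \<Rightarrow> real mat \<Rightarrow> real mat \<Rightarrow> (nat \<Rightarrow> real) \<Rightarrow> real mat" where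
  "info_mat J se2 Sg A xi =
     transpose_mat A * M0_half J xi *
     minv (se2 \<cdot>\<^sub>m 1\<^sub>m J + M0_half J xi * Sg * M0_half J xi) *
     M0_half J xi * A"

definition approx_design :: "nat \<Rightarrow> real \<Rightarrow> (nat \<Rightarrow> real) \<Rightarrow> bool" where
  "approx_design J I xi \<longleftrightarrow> (\<forall>j<J. xi j \<ge> 0) \<and> (\<Sum>j<J. xi j) = I"

definition estimable :: "nat \<Rightarrow> real mat \<Rightarrow> (nat \<Rightarrow> real) \<Rightarrow> bool" where
  "estimable J A xi \<longleftrightarrow>
     (\<forall>v \<in> carrier_vec (dim_col A). A *\<^sub>v v = 0\<^sub>v (dim_row A) \<longrightarrow> v = 0\<^sub>v (dim_col A)) \<and>
     (\<forall>k < dim_col A. \<exists>w \<in> carrier_vec J. col A k = diag_design J xi *\<^sub>v w)"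

definition D_optimal :: "nat \<Rightarrow> real \<Rightarrow> real \<Rightarrow> real mat \<Rightarrow> real mat \<Rightarrow> (nat \<Rightarrow> real) \<Rightarrow> bool" where
  "D_optimal J I se2 Sg A xi \<longleftrightarrow>
     approx_design J I xi \<and> estimable J A xi \<and>
     (\<forall>xi'. approx_design J I xi' \<and> estimable J A xi' \<longrightarrow>
        ln (det (info_mat J se2 Sg A xi)) \<ge> ln (det (info_mat J se2 Sg A xi')))"

end

theory Submission
  imports Defs
begin

lemma det_mat: "det (mat n n f) = (\<Sum>p\<in>{p. p permutes {0..<n}}. signof p * (\<Prod>i=0..<n. f (i, p i)))"
proof -
  have "det (mat n n f) = (\<Sum>p\<in>{p. p permutes {0..<n}}. signof p * (\<Prod>i=0..<n. mat n n f $$ (i, p i)))"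
    by (rule det_def') simp
  also have "\<dots> = (\<Sum>p\<in>{p. p permutes {0..<n}}. signof p * (\<Prod>i=0..<n. f (i, p i)))"
  proof (rule sum.cong[OF refl])
    fix p assume "p \<in> {p. p permutes {0..<n}}"
    then have p: "p permutes {0..<n}" by simp
    have "(\<Prod>i=0..<n. mat n n f $$ (i, p i)) = (\<Prod>i=0..<n. f (i, p i))"
      by (rule prod.cong[OF refl]) (use p in \<open>auto simp: permutes_in_image\<close>)
    then show "signof p * (\<Prod>i=0..<n. mat n n f $$ (i, p i)) = signof p * (\<Prod>i=0..<n. f (i, p i))" by simp
  qed
  finally show ?thesis .
qed

definition Emat :: "nat \<Rightarrow> nat set \<Rightarrow> (nat \<Rightarrow> nat \<Rightarrow> real) \<Rightarrow> real mat" where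
  "Emat n T S = mat n n (\<lambda>(i,j). if i \<in> T \<or> j \<in> T then (if i = j then 1 else 0) else S i j)"

lemma expand_pointwise:
  fixes a b :: "nat \<Rightarrow> real"
  assumes p: "p permutes U" and T: "T \<subseteq> U" and fin: "finite U"
  shows "(\<Prod>i\<in>T. if i = p i then a i else 0) * (\<Prod>i\<in>U - T. b i * b (p i) * S i (p i))
     = (\<Prod>i\<in>T. a i) * (\<Prod>i\<in>U - T. b i ^ 2) *
       (\<Prod>i\<in>U. if i \<in> T \<or> p i \<in> T then (if i = p i then 1 else 0) else S i (p i))"
proof (cases "\<forall>i\<in>T. p i = i")
  case True
  have finT: "finite T" using T fin finite_subset by blast
  have inj: "inj_on p (U - T)" using p by (meson permutes_inj_on)
  have img: "p ` (U - T) = U - T"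
  proof -
    have "p ` U = U" using p by (rule permutes_image)
    moreover have "p ` T = T" using True by (auto simp: image_iff)
    ultimately show ?thesis using permutes_inj[OF p] by (metis image_set_diff)
  qed
  have 1: "(\<Prod>i\<in>U - T. b (p i)) = (\<Prod>i\<in>U - T. b i)"
    using prod.reindex[OF inj, of b] img by simp
  have 2: "(\<Prod>i\<in>T. if i = p i then a i else 0) = (\<Prod>i\<in>T. a i)"
    using True by (intro prod.cong) auto
  have 3: "(\<Prod>i\<in>U. if i \<in> T \<or> p i \<in> T then (if i = p i then 1 else 0) else S i (p i))
     = (\<Prod>i\<in>U - T. S i (p i))"
  proof -
    have "(\<Prod>i\<in>U. if i \<in> T \<or> p i \<in> T then (if i = p i then 1 else 0) else S i (p i))
      = (\<Prod>i\<in>U - T. if i \<in> T \<or> p i \<in> T then (if i = p i then 1 else 0) else S i (p i)) *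
        (\<Prod>i\<in>T. if i \<in> T \<or> p i \<in> T then (if i = p i then 1 else 0) else S i (p i))"
      by (rule prod.subset_diff[OF T fin])
    also have "(\<Prod>i\<in>T. if i \<in> T \<or> p i \<in> T then (if i = p i then 1 else (0::real)) else S i (p i)) = 1"
      using True by (intro prod.neutral) auto
    also have "(\<Prod>i\<in>U - T. if i \<in> T \<or> p i \<in> T then (if i = p i then 1 else 0) else S i (p i))
       = (\<Prod>i\<in>U - T. S i (p i))"
    proof (intro prod.cong refl)
      fix i assume i: "i \<in> U - T"
      have "p i \<notin> T"
      proof
        assume "p i \<in> T"
        then have "p (p i) = p i" using True by auto
        then have "p i = i" using permutes_inj[OF p] by (auto dest: injD)
        with \<open>p i \<in> T\<close> i show False by auto
      qed
      then show "(if i \<in> T \<or> p i \<in> T then (if i = p i then 1 else 0) else S i (p i)) = S i (p i)"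
        using i by auto
    qed
    finally show ?thesis by simp
  qed
  have "(\<Prod>i\<in>U - T. b i * b (p i) * S i (p i)) = (\<Prod>i\<in>U - T. b i) * (\<Prod>i\<in>U - T. b (p i)) * (\<Prod>i\<in>U - T. S i (p i))"
    by (simp add: prod.distrib)
  also have "\<dots> = (\<Prod>i\<in>U - T. b i ^ 2) * (\<Prod>i\<in>U - T. S i (p i))"
    by (simp add: 1 power2_eq_square prod.distrib)
  finally show ?thesis using 2 3 by simp
next
  case False
  then obtain k where k: "k \<in> T" "p k \<noteq> k" by auto
  have finT: "finite T" using T fin finite_subset by blast
  have "(\<Prod>i\<in>T. if i = p i then a i else 0) = 0"
    using k finT by (intro prod_zero) (auto intro!: bexI[of _ k])
  moreover have "(\<Prod>i\<in>U. if i \<in> T \<or> p i \<in> T then (if i = p i then 1 else 0) else S i (p i)) = (0::real)"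
    using k fin T by (intro prod_zero) (auto intro!: bexI[of _ k])
  ultimately show ?thesis by simp
qed

lemma det_expand:
  fixes a b :: "nat \<Rightarrow> real"
  shows "det (mat n n (\<lambda>(i,j). (if i = j then a i else 0) + b i * b j * S i j))
    = (\<Sum>T\<in>Pow {0..<n}. (\<Prod>i\<in>T. a i) * (\<Prod>i\<in>{0..<n} - T. b i ^ 2) * det (Emat n T S))"
proof -
  let ?U = "{0..<n}"
  let ?P = "{p. p permutes ?U}"
  have "det (mat n n (\<lambda>(i,j). (if i = j then a i else 0) + b i * b j * S i j))
    = (\<Sum>p\<in>?P. signof p * (\<Prod>i\<in>?U. (if i = p i then a i else 0) + b i * b (p i) * S i (p i)))"
    unfolding det_mat by simp
  also have "\<dots> = (\<Sum>p\<in>?P. signof p * (\<Sum>T\<in>Pow ?U. (\<Prod>i\<in>T. if i = p i then a i else 0) * (\<Prod>i\<in>?U - T. b i * b (p i) * S i (p i))))"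
    by (subst prod_add) auto
  also have "\<dots> = (\<Sum>p\<in>?P. (\<Sum>T\<in>Pow ?U. signof p * ((\<Prod>i\<in>T. a i) * (\<Prod>i\<in>?U - T. b i ^ 2) *
       (\<Prod>i\<in>?U. if i \<in> T \<or> p i \<in> T then (if i = p i then 1 else 0) else S i (p i)))))"
    unfolding sum_distrib_left
    by (intro sum.cong refl, subst expand_pointwise) auto
  also have "\<dots> = (\<Sum>T\<in>Pow ?U. (\<Sum>p\<in>?P. signof p * ((\<Prod>i\<in>T. a i) * (\<Prod>i\<in>?U - T. b i ^ 2) *
       (\<Prod>i\<in>?U. if i \<in> T \<or> p i \<in> T then (if i = p i then 1 else 0) else S i (p i)))))"
    by (rule sum.swap)
  also have "\<dots> = (\<Sum>T\<in>Pow ?U. (\<Prod>i\<in>T. a i) * (\<Prod>i\<in>?U - T. b i ^ 2) * det (Emat n T S))"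
    unfolding Emat_def det_mat
    by (intro sum.cong refl) (simp add: sum_distrib_left ac_simps)
  finally show ?thesis .
qed


definition psd :: "nat \<Rightarrow> (nat \<Rightarrow> nat \<Rightarrow> real) \<Rightarrow> bool" where
  "psd n E \<longleftrightarrow> (\<forall>v. (\<Sum>i=0..<n. \<Sum>j=0..<n. v i * E i j * v j) \<ge> 0)"

lemma Emat_psd:
  assumes "psd n S"
  shows "psd n (\<lambda>i j. if i \<in> T \<or> j \<in> T then (if i = j then 1 else 0) else S i j)"
  unfolding psd_def
proof
  fix v :: "nat \<Rightarrow> real"
  define w where "w i = (if i \<in> T then 0 else v i)" for i
  have pt: "v i * (if i \<in> T \<or> j \<in> T then (if i = j then 1 else 0) else S i j) * v j
     = (if i = j \<and> i \<in> T then v i ^ 2 else 0) + w i * S i j * w j" for i j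
    unfolding w_def by (auto simp: power2_eq_square)
  have "(\<Sum>i=0..<n. \<Sum>j=0..<n. v i * (if i \<in> T \<or> j \<in> T then (if i = j then 1 else 0) else S i j) * v j)
    = (\<Sum>i=0..<n. \<Sum>j=0..<n. (if i = j \<and> i \<in> T then v i ^ 2 else 0)) + (\<Sum>i=0..<n. \<Sum>j=0..<n. w i * S i j * w j)"
    unfolding pt by (simp add: sum.distrib)
  moreover have "(\<Sum>i=0..<n. \<Sum>j=0..<n. w i * S i j * w j) \<ge> 0" using assms unfolding psd_def by blast
  moreover have "(\<Sum>i=0..<n. \<Sum>j=0..<n. (if i = j \<and> i \<in> T then v i ^ 2 else (0::real))) \<ge> 0"
    by (intro sum_nonneg) auto
  ultimately show "(\<Sum>i=0..<n. \<Sum>j=0..<n. v i * (if i \<in> T \<or> j \<in> T then (if i = j then 1 else 0) else S i j) * v j) \<ge> 0"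
    by simp
qed

lemma pd_det_nonzero:
  assumes "psd n E" and s: "0 \<le> s" "s < 1"
  shows "det (mat n n (\<lambda>(i,j). (1 - s) * (if i = j then 1 else 0) + s * E i j)) \<noteq> 0"
proof
  let ?M = "mat n n (\<lambda>(i,j). (1 - s) * (if i = j then 1 else 0) + s * E i j)"
  assume "det ?M = 0"
  then obtain v where v: "v \<in> carrier_vec n" "v \<noteq> 0\<^sub>v n" "?M *\<^sub>v v = 0\<^sub>v n"
    using det_0_iff_vec_prod_zero[of ?M n] by auto
  define w where "w i = v $ i" for i
  have row: "(\<Sum>j=0..<n. ((1 - s) * (if i = j then 1 else 0) + s * E i j) * w j) = 0" if "i < n" for i
  proof -
    have "(?M *\<^sub>v v) $ i = 0" using v(3) that by simp
    then show ?thesis using that v(1) unfolding w_def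
      by (simp add: scalar_prod_def row_def)
  qed
  have "\<exists>k<n. v $ k \<noteq> 0"
  proof (rule ccontr)
    assume "\<not> ?thesis"
    then have "v = 0\<^sub>v n" using v(1) by (intro eq_vecI) auto
    with v(2) show False by simp
  qed
  then obtain k where k: "k < n" "w k \<noteq> 0" unfolding w_def by auto
  have pos: "(\<Sum>i=0..<n. w i ^ 2) > 0"
    using k by (intro sum_pos2[of _ k]) auto
  have "0 = (\<Sum>i=0..<n. w i * (\<Sum>j=0..<n. ((1 - s) * (if i = j then 1 else 0) + s * E i j) * w j))"
    using row by simp
  also have "\<dots> = (1 - s) * (\<Sum>i=0..<n. w i ^ 2) + s * (\<Sum>i=0..<n. \<Sum>j=0..<n. w i * E i j * w j)"
  proof -
    have pt: "w i * (((1 - s) * (if i = j then 1 else 0) + s * E i j) * w j)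
       = (1 - s) * (if i = j then w i ^ 2 else 0) + s * (w i * E i j * w j)" for i j
      by (auto simp: algebra_simps power2_eq_square)
    have d: "(\<Sum>j=0..<n. (if i = j then w i ^ 2 else 0)) = (if i < n then w i ^ 2 else 0)" for i
      by (simp add: sum.delta)
    have "(\<Sum>i=0..<n. w i * (\<Sum>j=0..<n. ((1 - s) * (if i = j then 1 else 0) + s * E i j) * w j))
      = (\<Sum>i=0..<n. \<Sum>j=0..<n. (1 - s) * (if i = j then w i ^ 2 else 0) + s * (w i * E i j * w j))"
      by (simp only: sum_distrib_left pt)
    also have "\<dots> = (\<Sum>i=0..<n. (1 - s) * (\<Sum>j=0..<n. (if i = j then w i ^ 2 else 0)) + s * (\<Sum>j=0..<n. w i * E i j * w j))"
      by (simp only: sum.distrib sum_distrib_left)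
    also have "\<dots> = (\<Sum>i=0..<n. (1 - s) * w i ^ 2 + s * (\<Sum>j=0..<n. w i * E i j * w j))"
      by (intro sum.cong refl) (simp add: d)
    also have "\<dots> = (1 - s) * (\<Sum>i=0..<n. w i ^ 2) + s * (\<Sum>i=0..<n. \<Sum>j=0..<n. w i * E i j * w j)"
      by (simp only: sum.distrib sum_distrib_left)
    finally show ?thesis .
  qed
  also have "\<dots> > 0"
  proof -
    have "(1 - s) * (\<Sum>i=0..<n. w i ^ 2) > 0" using pos s by simp
    moreover have "s * (\<Sum>i=0..<n. \<Sum>j=0..<n. w i * E i j * w j) \<ge> 0"
      using assms(1) s unfolding psd_def by simp
    ultimately show ?thesis by linarith
  qed
  finally show False by simp
qed

lemma psd_det_nonneg:
  assumes "psd n E"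
  shows "det (mat n n (\<lambda>(i,j). E i j)) \<ge> 0"
proof (rule ccontr)
  define g where "g s = det (mat n n (\<lambda>(i,j). (1 - s) * (if i = j then 1 else 0) + s * E i j))" for s :: real
  assume "\<not> ?thesis"
  then have g1: "g 1 < 0" unfolding g_def by simp
  have "mat n n (\<lambda>(i,j). (1 - 0) * (if i = j then 1 else 0) + 0 * E i j) = (1\<^sub>m n :: real mat)"
    by (rule eq_matI) auto
  then have g0: "g 0 = 1" unfolding g_def by simp
  have cont: "continuous_on {0..1} g"
    unfolding g_def det_mat prod.case by (intro continuous_intros)
  obtain s where s: "0 \<le> s" "s \<le> 1" "g s = 0"
    using IVT2'[of g 1 0 0] g0 g1 cont by auto
  have "s < 1" using s g1 by (cases "s = 1") auto
  then show False using pd_det_nonzero[OF assms s(1)] s(3) unfolding g_def by simp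
qed


definition arc :: "real \<Rightarrow> nat \<Rightarrow> real" where
  "arc rho k = (if k = 0 then 1 else sqrt (1 - rho ^ 2))"

definition arl :: "real \<Rightarrow> nat \<Rightarrow> nat \<Rightarrow> real" where
  "arl rho i k = (if k \<le> i then rho ^ (i - k) * arc rho k else 0)"

lemma arc_norm:
  assumes "0 \<le> rho" "rho \<le> 1"
  shows "(\<Sum>k\<le>i. (rho ^ (i - k) * arc rho k) ^ 2) = 1"
proof (induction i)
  case 0
  then show ?case by (simp add: arc_def)
next
  case (Suc i)
  have r2: "rho ^ 2 \<le> 1" using assms by (simp add: power_le_one)
  have "(\<Sum>k\<le>Suc i. (rho ^ (Suc i - k) * arc rho k) ^ 2)
      = (\<Sum>k\<le>i. (rho ^ (Suc i - k) * arc rho k) ^ 2) + (arc rho (Suc i)) ^ 2"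
    by simp
  also have "(\<Sum>k\<le>i. (rho ^ (Suc i - k) * arc rho k) ^ 2) = rho ^ 2 * (\<Sum>k\<le>i. (rho ^ (i - k) * arc rho k) ^ 2)"
    unfolding sum_distrib_left
    by (intro sum.cong refl) (simp add: Suc_diff_le power_mult_distrib)
  also have "(arc rho (Suc i)) ^ 2 = 1 - rho ^ 2" using r2 by (simp add: arc_def)
  finally show ?case using Suc by simp
qed

lemma arl_gram_le:
  assumes "0 \<le> rho" "rho \<le> 1" "i \<le> j" "j < n"
  shows "(\<Sum>k=0..<n. arl rho i k * arl rho j k) = rho ^ (j - i)"
proof -
  have "(\<Sum>k=0..<n. arl rho i k * arl rho j k)
      = (\<Sum>k=0..<n. if k \<le> i then rho ^ (j - i) * (rho ^ (i - k) * arc rho k) ^ 2 else 0)"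
  proof (intro sum.cong refl)
    fix k
    show "arl rho i k * arl rho j k = (if k \<le> i then rho ^ (j - i) * (rho ^ (i - k) * arc rho k) ^ 2 else 0)"
    proof (cases "k \<le> i")
      case True
      then have "rho ^ (j - k) = rho ^ (j - i) * rho ^ (i - k)"
        using assms by (simp add: power_add[symmetric])
      then show ?thesis using True assms unfolding arl_def by (simp add: power2_eq_square)
    next
      case False then show ?thesis unfolding arl_def by simp
    qed
  qed
  also have "\<dots> = (\<Sum>k\<in>{k\<in>{0..<n}. k \<le> i}. rho ^ (j - i) * (rho ^ (i - k) * arc rho k) ^ 2)"
    by (rule sum.inter_filter[symmetric]) simp
  also have "{k\<in>{0..<n}. k \<le> i} = {..i}" using assms by auto
  also have "(\<Sum>k\<in>{..i}. rho ^ (j - i) * (rho ^ (i - k) * arc rho k) ^ 2) = rho ^ (j - i)"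
    using arc_norm[OF assms(1,2)] by (simp add: sum_distrib_left[symmetric])
  finally show ?thesis .
qed

lemma arl_gram:
  assumes "0 \<le> rho" "rho \<le> 1" "i < n" "j < n"
  shows "rho ^ (if i \<le> j then j - i else i - j) = (\<Sum>k=0..<n. arl rho i k * arl rho j k)"
proof (cases "i \<le> j")
  case True then show ?thesis using arl_gram_le[OF assms(1,2) True assms(4)] by simp
next
  case False
  then have "j \<le> i" by simp
  from arl_gram_le[OF assms(1,2) this assms(3)] False show ?thesis by (simp add: mult.commute)
qed

lemma ar_psd:
  assumes "0 \<le> rho" "rho \<le> 1" "0 \<le> sg2"
  shows "psd n (\<lambda>i j. sg2 * rho ^ (if i \<le> j then j - i else i - j))"
  unfolding psd_def
proof
  fix v :: "nat \<Rightarrow> real"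
  have "(\<Sum>i=0..<n. \<Sum>j=0..<n. v i * (sg2 * rho ^ (if i \<le> j then j - i else i - j)) * v j)
     = (\<Sum>i=0..<n. \<Sum>j=0..<n. \<Sum>k=0..<n. sg2 * ((v i * arl rho i k) * (v j * arl rho j k)))"
    by (intro sum.cong refl) (simp add: arl_gram[OF assms(1,2)] sum_distrib_left sum_distrib_right ac_simps)
  also have "\<dots> = sg2 * (\<Sum>k=0..<n. (\<Sum>i=0..<n. v i * arl rho i k) * (\<Sum>j=0..<n. v j * arl rho j k))"
  proof -
    have "sg2 * (\<Sum>k=0..<n. (\<Sum>i=0..<n. v i * arl rho i k) * (\<Sum>j=0..<n. v j * arl rho j k))
      = (\<Sum>k=0..<n. \<Sum>i=0..<n. \<Sum>j=0..<n. sg2 * ((v i * arl rho i k) * (v j * arl rho j k)))"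
      unfolding sum_product unfolding sum_distrib_left by (rule refl)
    also have "\<dots> = (\<Sum>i=0..<n. \<Sum>k=0..<n. \<Sum>j=0..<n. sg2 * ((v i * arl rho i k) * (v j * arl rho j k)))"
      by (rule sum.swap)
    also have "\<dots> = (\<Sum>i=0..<n. \<Sum>j=0..<n. \<Sum>k=0..<n. sg2 * ((v i * arl rho i k) * (v j * arl rho j k)))"
      by (rule sum.cong[OF refl], rule sum.swap)
    finally show ?thesis by simp
  qed
  also have "\<dots> \<ge> 0" by (rule mult_nonneg_nonneg[OF assms(3)], rule sum_nonneg, rule zero_le_square)
  finally show "(\<Sum>i=0..<n. \<Sum>j=0..<n. v i * (sg2 * rho ^ (if i \<le> j then j - i else i - j)) * v j) \<ge> 0" .
qed


lemma diag_mult_left: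
  assumes "M \<in> carrier_mat n m" "i < n" "j < m"
  shows "(mat n n (\<lambda>(i,j). if i = j then d i else 0) * M) $$ (i,j) = d i * M $$ (i,j)"
proof -
  have "(mat n n (\<lambda>(i,j). if i = j then d i else 0) * M) $$ (i,j) = (\<Sum>k=0..<n. (if i = k then d i else 0) * M $$ (k,j))"
    using assms by (simp add: scalar_prod_def)
  also have "\<dots> = (\<Sum>k=0..<n. if k = i then d i * M $$ (i,j) else 0)" by (rule sum.cong) auto
  finally show ?thesis using assms by simp
qed

lemma diag_mult_right:
  assumes "M \<in> carrier_mat m n" "i < m" "j < n"
  shows "(M * mat n n (\<lambda>(i,j). if i = j then d i else 0)) $$ (i,j) = M $$ (i,j) * d j"
proof -
  have "(M * mat n n (\<lambda>(i,j). if i = j then d i else 0)) $$ (i,j) = (\<Sum>k=0..<n. M $$ (i,k) * (if k = j then d k else 0))"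
    using assms by (simp add: scalar_prod_def)
  also have "\<dots> = (\<Sum>k=0..<n. if k = j then M $$ (i,j) * d j else 0)" by (rule sum.cong) auto
  finally show ?thesis using assms by simp
qed

definition Bm :: "nat \<Rightarrow> real \<Rightarrow> real \<Rightarrow> real \<Rightarrow> (nat \<Rightarrow> real) \<Rightarrow> real mat" where
  "Bm J se2 sg2 rho z = mat J J (\<lambda>(i,j). (if i = j then se2 else 0) +
      sqrt (z i) * sqrt (z j) * (sg2 * rho ^ (if i \<le> j then j - i else i - j)))"

lemma B_eq:
  "se2 \<cdot>\<^sub>m 1\<^sub>m J + M0_half J z * ar_cov J sg2 rho * M0_half J z = Bm J se2 sg2 rho z"
proof (rule eq_matI)
  fix i j assume ij: "i < dim_row (Bm J se2 sg2 rho z)" "j < dim_col (Bm J se2 sg2 rho z)"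
  then have i: "i < J" and j: "j < J" by (auto simp: Bm_def)
  have c1: "ar_cov J sg2 rho \<in> carrier_mat J J" by (simp add: ar_cov_def)
  have c2: "M0_half J z * ar_cov J sg2 rho \<in> carrier_mat J J" by (rule mult_carrier_mat[of _ J J]) (simp_all add: ar_cov_def M0_half_def)
  have "(M0_half J z * ar_cov J sg2 rho * M0_half J z) $$ (i,j)
      = (M0_half J z * ar_cov J sg2 rho) $$ (i,j) * sqrt (z j)"
    unfolding M0_half_def[of J z] using diag_mult_right[OF c2[unfolded M0_half_def] i j] by simp
  also have "(M0_half J z * ar_cov J sg2 rho) $$ (i,j) = sqrt (z i) * ar_cov J sg2 rho $$ (i,j)"
    unfolding M0_half_def using diag_mult_left[OF c1 i j] by simp
  finally show "(se2 \<cdot>\<^sub>m 1\<^sub>m J + M0_half J z * ar_cov J sg2 rho * M0_half J z) $$ (i,j) = Bm J se2 sg2 rho z $$ (i,j)"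
    using i j by (simp add: Bm_def ar_cov_def M0_half_def)
qed (auto simp: Bm_def M0_half_def)

lemma det_M0_half: "det (M0_half J z) = (\<Prod>i=0..<J. sqrt (z i))"
proof -
  have "upper_triangular (M0_half J z)" by (auto simp: upper_triangular_def M0_half_def)
  then have "det (M0_half J z) = prod_list (diag_mat (M0_half J z))"
    by (rule det_upper_triangular[of _ J]) (simp_all add: M0_half_def)
  also have "\<dots> = (\<Prod>i=0..<J. sqrt (z i))"
    unfolding prod_list_diag_prod by (simp add: M0_half_def)
  finally show ?thesis .
qed

lemma det_info:
  assumes A: "A \<in> carrier_mat J J" and dB: "det (Bm J se2 sg2 rho z) \<noteq> 0"
  shows "det (info_mat J se2 (ar_cov J sg2 rho) A z) = det A ^ 2 * (\<Prod>i=0..<J. sqrt (z i)) ^ 2 / det (Bm J se2 sg2 rho z)"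
proof -
  let ?B = "Bm J se2 sg2 rho z"
  let ?H = "M0_half J z"
  have cB: "?B \<in> carrier_mat J J" by (simp add: Bm_def)
  have cH: "?H \<in> carrier_mat J J" by (simp add: M0_half_def)
  obtain Bi where Bi: "mat_inverse ?B = Some Bi"
  proof (cases "mat_inverse ?B")
    case None
    have "?B \<notin> Units (ring_mat TYPE(real) J undefined)" by (rule mat_inverse(1)[OF cB None])
    with det_non_zero_imp_unit[OF cB dB, of undefined] show ?thesis by blast
  next
    case (Some Bi) then show ?thesis using that by blast
  qed
  from mat_inverse(2)[OF cB Bi] have BBi: "?B * Bi = 1\<^sub>m J" and cBi: "Bi \<in> carrier_mat J J" by auto
  have "det ?B * det Bi = 1" using det_mult[OF cB cBi] BBi by simp
  then have dBi: "det Bi = 1 / det ?B" using dB by (simp add: field_simps)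
  have mi: "minv (se2 \<cdot>\<^sub>m 1\<^sub>m J + ?H * ar_cov J sg2 rho * ?H) = Bi"
    unfolding B_eq minv_def Bi by simp
  have cAt: "transpose_mat A \<in> carrier_mat J J" using A by simp
  have "det (info_mat J se2 (ar_cov J sg2 rho) A z) = det (transpose_mat A * ?H * Bi * ?H * A)"
    unfolding info_mat_def mi ..
  also have "\<dots> = det (transpose_mat A) * det ?H * det Bi * det ?H * det A"
  proof -
    have c1: "transpose_mat A * ?H \<in> carrier_mat J J" using cAt cH by (rule mult_carrier_mat)
    have c2: "transpose_mat A * ?H * Bi \<in> carrier_mat J J" using c1 cBi by (rule mult_carrier_mat)
    have c3: "transpose_mat A * ?H * Bi * ?H \<in> carrier_mat J J" using c2 cH by (rule mult_carrier_mat)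
    show ?thesis
      by (simp only: det_mult[OF c3 A] det_mult[OF c2 cH] det_mult[OF c1 cBi] det_mult[OF cAt cH])
  qed
  also have "\<dots> = det A ^ 2 * (\<Prod>i=0..<J. sqrt (z i)) ^ 2 / det ?B"
    unfolding det_transpose[OF A] dBi det_M0_half by (simp add: power2_eq_square)
  finally show ?thesis .
qed


definition Sg :: "real \<Rightarrow> real \<Rightarrow> nat \<Rightarrow> nat \<Rightarrow> real" where
  "Sg sg2 rho i j = sg2 * rho ^ (if i \<le> j then j - i else i - j)"

definition Gf :: "nat \<Rightarrow> real \<Rightarrow> real \<Rightarrow> real \<Rightarrow> (nat \<Rightarrow> real) \<Rightarrow> real" where
  "Gf J se2 sg2 rho z = (\<Sum>T\<in>Pow {0..<J}. se2 ^ card T * det (Emat J T (Sg sg2 rho)) * (\<Prod>i\<in>T. 1 / z i))"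

lemma detB_expand:
  "det (Bm J se2 sg2 rho z) = (\<Sum>T\<in>Pow {0..<J}. se2 ^ card T * (\<Prod>i\<in>{0..<J} - T. sqrt (z i) ^ 2) * det (Emat J T (Sg sg2 rho)))"
proof -
  have eq: "Bm J se2 sg2 rho z = mat J J (\<lambda>(i,j). (if i = j then (\<lambda>_. se2) i else 0) + (\<lambda>i. sqrt (z i)) i * (\<lambda>i. sqrt (z i)) j * Sg sg2 rho i j)"
    unfolding Bm_def Sg_def by simp
  show ?thesis unfolding eq det_expand by simp
qed

lemma detB_G:
  assumes z: "\<forall>i<J. z i > 0"
  shows "det (Bm J se2 sg2 rho z) = (\<Prod>i=0..<J. z i) * Gf J se2 sg2 rho z"
proof -
  have "(\<Prod>i\<in>{0..<J} - T. sqrt (z i) ^ 2) = (\<Prod>i=0..<J. z i) * (\<Prod>i\<in>T. 1 / z i)" if T: "T \<in> Pow {0..<J}" for T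
  proof -
    have T': "T \<subseteq> {0..<J}" using T by simp
    have "(\<Prod>i\<in>{0..<J} - T. sqrt (z i) ^ 2) = (\<Prod>i\<in>{0..<J} - T. z i)"
      using z by (intro prod.cong refl) auto
    moreover have "(\<Prod>i=0..<J. z i) = (\<Prod>i\<in>{0..<J} - T. z i) * (\<Prod>i\<in>T. z i)"
      by (rule prod.subset_diff[OF T']) simp
    moreover have "(\<Prod>i\<in>T. z i) \<noteq> 0"
    proof -
      have "\<forall>i\<in>T. z i > 0" using z T' by auto
      then have "(\<Prod>i\<in>T. z i) > 0" by (intro prod_pos) auto
      then show ?thesis by simp
    qed
    moreover have "(\<Prod>i\<in>T. 1 / z i) = 1 / (\<Prod>i\<in>T. z i)" by (simp add: prod_dividef)
    ultimately show ?thesis by simp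
  qed
  then show ?thesis
    unfolding detB_expand Gf_def sum_distrib_left
    by (intro sum.cong refl) (simp add: ac_simps)
qed

lemma c_nonneg:
  assumes "0 \<le> rho" "rho \<le> 1" "0 \<le> sg2"
  shows "det (Emat J T (Sg sg2 rho)) \<ge> 0"
  using psd_det_nonneg[OF Emat_psd[where T=T, OF ar_psd[OF assms]]]
  unfolding Emat_def Sg_def by simp

lemma c_full: "det (Emat J {0..<J} S) = 1"
proof -
  have "Emat J {0..<J} S = 1\<^sub>m J" unfolding Emat_def by (rule eq_matI) auto
  then show ?thesis by simp
qed

lemma G_pos:
  assumes "0 \<le> rho" "rho \<le> 1" "0 \<le> sg2" "se2 > 0" and z: "\<forall>i<J. z i > 0"
  shows "Gf J se2 sg2 rho z > 0"
proof -
  have "0 < se2 ^ card {0..<J} * det (Emat J {0..<J} (Sg sg2 rho)) * (\<Prod>i\<in>{0..<J}. 1 / z i)"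
  proof -
    have "(\<Prod>i\<in>{0..<J}. 1 / z i) > 0" using z by (intro prod_pos) auto
    then show ?thesis using assms by (simp add: c_full)
  qed
  also have "\<dots> \<le> Gf J se2 sg2 rho z"
    unfolding Gf_def
    by (rule member_le_sum) (use assms c_nonneg in \<open>auto intro!: mult_nonneg_nonneg prod_nonneg simp: subset_eq\<close>)
  finally show ?thesis .
qed

lemma sq_id: "((a + b) / 2) ^ 2 = (a::real) * b + ((a - b) / 2) ^ 2"
  by (simp add: power2_eq_square field_simps)

lemma pt_ineq:
  fixes x y :: real assumes "x > 0" "y > 0"
  shows "(1 / ((x + y) / 2)) ^ 2 \<le> 1 / x * (1 / y)"
    and "x \<noteq> y \<Longrightarrow> (1 / ((x + y) / 2)) ^ 2 < 1 / x * (1 / y)"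
proof -
  have e: "(1 / ((x + y) / 2)) ^ 2 = 1 / ((x + y) / 2) ^ 2" "1 / x * (1 / y) = 1 / (x * y)"
    by (rule power_one_over) simp
  have xy: "0 < x * y" using assms by simp
  have xy2: "0 < ((x + y) / 2) ^ 2" using assms by simp
  have "x * y \<le> ((x + y) / 2) ^ 2" unfolding sq_id by simp
  then have "1 / ((x + y) / 2) ^ 2 \<le> 1 / (x * y)"
    by (rule divide_left_mono) (auto intro: mult_pos_pos[OF xy2 xy])
  then show "(1 / ((x + y) / 2)) ^ 2 \<le> 1 / x * (1 / y)" unfolding e .
  assume "x \<noteq> y"
  then have "0 < ((x - y) / 2) ^ 2" by simp
  then have "x * y < ((x + y) / 2) ^ 2" unfolding sq_id by simp
  then have "1 / ((x + y) / 2) ^ 2 < 1 / (x * y)"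
    by (rule divide_strict_left_mono) (auto intro: mult_pos_pos[OF xy2 xy])
  then show "(1 / ((x + y) / 2)) ^ 2 < 1 / x * (1 / y)" unfolding e .
qed

lemma am2: "(a::real) * b \<le> ((a + b) / 2) ^ 2"
  unfolding sq_id by simp

lemma prod_half:
  fixes x y :: "nat \<Rightarrow> real"
  assumes fin: "finite T" and pos: "\<forall>i\<in>T. x i > 0 \<and> y i > 0"
  shows "(\<Prod>i\<in>T. 1 / ((x i + y i) / 2)) \<le> ((\<Prod>i\<in>T. 1 / x i) + (\<Prod>i\<in>T. 1 / y i)) / 2"
    and "(\<exists>i\<in>T. x i \<noteq> y i) \<Longrightarrow> (\<Prod>i\<in>T. 1 / ((x i + y i) / 2)) < ((\<Prod>i\<in>T. 1 / x i) + (\<Prod>i\<in>T. 1 / y i)) / 2"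
proof -
  let ?R = "\<Prod>i\<in>T. 1 / ((x i + y i) / 2)"
  let ?P = "\<Prod>i\<in>T. 1 / x i"
  let ?Q = "\<Prod>i\<in>T. 1 / y i"
  have R0: "?R \<ge> 0" by (rule prod_nonneg) (use pos in force)
  have P0: "?P \<ge> 0" by (rule prod_nonneg) (use pos in force)
  have Q0: "?Q \<ge> 0" by (rule prod_nonneg) (use pos in force)
  have PQ0: "(?P + ?Q) / 2 \<ge> 0" using P0 Q0 by simp
  have R2: "?R ^ 2 = (\<Prod>i\<in>T. (1 / ((x i + y i) / 2)) ^ 2)" by (rule prod_power_distrib)
  have PQ: "?P * ?Q = (\<Prod>i\<in>T. 1 / x i * (1 / y i))" by (rule prod.distrib[symmetric])
  have am: "?P * ?Q \<le> ((?P + ?Q) / 2) ^ 2"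
    by (rule am2)
  have pw: "0 \<le> (1 / ((x i + y i) / 2)) ^ 2 \<and> (1 / ((x i + y i) / 2)) ^ 2 \<le> 1 / x i * (1 / y i)" if "i \<in> T" for i
  proof -
    have "x i > 0" "y i > 0" using pos that by auto
    from pt_ineq(1)[OF this] show ?thesis by simp
  qed
  have "?R ^ 2 \<le> ?P * ?Q"
    unfolding R2 PQ by (rule prod_mono) (rule pw)
  then have "?R ^ 2 \<le> ((?P + ?Q) / 2) ^ 2" using am by (rule order_trans)
  then show "?R \<le> (?P + ?Q) / 2" using PQ0 by (rule power2_le_imp_le)
  assume "\<exists>i\<in>T. x i \<noteq> y i"
  then obtain k where k: "k \<in> T" "x k \<noteq> y k" by auto
  have lt: "(1 / ((x k + y k) / 2)) ^ 2 < 1 / x k * (1 / y k)"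
  proof -
    have "x k > 0" "y k > 0" using pos k by auto
    from pt_ineq(2)[OF this k(2)] show ?thesis .
  qed
  have gpos: "0 < 1 / x i * (1 / y i)" if "i \<in> T" for i
  proof -
    have "x i > 0" "y i > 0" using pos that by auto
    then show ?thesis by simp
  qed
  have "?R ^ 2 < ?P * ?Q"
    unfolding R2 PQ
    by (rule prod_mono_strict[where f="\<lambda>i. (1 / ((x i + y i) / 2)) ^ 2" and g="\<lambda>i. 1 / x i * (1 / y i)", OF k(1) lt fin pw gpos])
  then have "?R ^ 2 < ((?P + ?Q) / 2) ^ 2" using am by (rule less_le_trans)
  then show "?R < (?P + ?Q) / 2" using PQ0 by (rule power_less_imp_less_base)
qed


lemma G_convex:
  assumes "0 \<le> rho" "rho \<le> 1" "0 \<le> sg2" "se2 > 0"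
    and x: "\<forall>i<J. x i > 0" and y: "\<forall>i<J. y i > 0" and ne: "\<exists>i<J. x i \<noteq> y i"
  shows "Gf J se2 sg2 rho (\<lambda>i. (x i + y i) / 2) < (Gf J se2 sg2 rho x + Gf J se2 sg2 rho y) / 2"
proof -
  let ?a = "\<lambda>T. se2 ^ card T * det (Emat J T (Sg sg2 rho))"
  have a0: "?a T \<ge> 0" for T using assms c_nonneg by simp
  have aU: "?a {0..<J} > 0" using assms by (simp add: c_full)
  have "(Gf J se2 sg2 rho x + Gf J se2 sg2 rho y) / 2
      = (\<Sum>T\<in>Pow {0..<J}. ?a T * (((\<Prod>i\<in>T. 1 / x i) + (\<Prod>i\<in>T. 1 / y i)) / 2))"
    unfolding Gf_def sum.distrib[symmetric] sum_divide_distrib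
    by (intro sum.cong refl) (simp add: algebra_simps)
  moreover have "Gf J se2 sg2 rho (\<lambda>i. (x i + y i) / 2)
      < (\<Sum>T\<in>Pow {0..<J}. ?a T * (((\<Prod>i\<in>T. 1 / x i) + (\<Prod>i\<in>T. 1 / y i)) / 2))"
    unfolding Gf_def
  proof (rule sum_strict_mono_ex1)
    show "finite (Pow {0..<J})" by simp
    show "\<forall>T\<in>Pow {0..<J}. ?a T * (\<Prod>i\<in>T. 1 / ((x i + y i) / 2)) \<le> ?a T * (((\<Prod>i\<in>T. 1 / x i) + (\<Prod>i\<in>T. 1 / y i)) / 2)"
    proof
      fix T assume T: "T \<in> Pow {0..<J}"
      then have fin: "finite T" by (auto intro: finite_subset)
      have pos: "\<forall>i\<in>T. x i > 0 \<and> y i > 0" using T x y by auto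
      show "?a T * (\<Prod>i\<in>T. 1 / ((x i + y i) / 2)) \<le> ?a T * (((\<Prod>i\<in>T. 1 / x i) + (\<Prod>i\<in>T. 1 / y i)) / 2)"
        by (rule mult_left_mono[OF prod_half(1)[OF fin pos] a0])
    qed
    have pos: "\<forall>i\<in>{0..<J}. x i > 0 \<and> y i > 0" using x y by auto
    have ne': "\<exists>i\<in>{0..<J}. x i \<noteq> y i" using ne by auto
    show "\<exists>T\<in>Pow {0..<J}. ?a T * (\<Prod>i\<in>T. 1 / ((x i + y i) / 2)) < ?a T * (((\<Prod>i\<in>T. 1 / x i) + (\<Prod>i\<in>T. 1 / y i)) / 2)"
      by (rule bexI[of _ "{0..<J}"], rule mult_strict_left_mono[OF prod_half(2)[OF _ pos ne'] aU]) auto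
  qed
  ultimately show ?thesis by simp
qed

definition rv :: "nat \<Rightarrow> nat \<Rightarrow> nat" where
  "rv J i = (if i < J then J - 1 - i else i)"

lemma rv_permutes: "rv J permutes {0..<J}"
proof (rule bij_imp_permutes)
  show "bij_betw (rv J) {0..<J} {0..<J}"
    by (rule bij_betw_byWitness[where f'="rv J"]) (auto simp: rv_def)
  show "x \<notin> {0..<J} \<Longrightarrow> rv J x = x" for x by (simp add: rv_def)
qed

lemma det_rev:
  assumes r: "r permutes {0..<n}"
  shows "det (mat n n (\<lambda>(i,j). f (r i, r j))) = det (mat n n f)"
proof -
  let ?M1 = "mat n n (\<lambda>(i,j). f (i, r j))"
  let ?Mt = "transpose_mat (mat n n f)"
  have rin: "i < n \<Longrightarrow> r i < n" for i using r by (simp add: permutes_in_image)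
  have c1: "?M1 \<in> carrier_mat n n" by simp
  have "mat n n (\<lambda>(i,j). f (r i, r j)) = mat n n (\<lambda>(i,j). ?M1 $$ (r i, j))"
    by (rule eq_matI) (auto simp: rin)
  then have "det (mat n n (\<lambda>(i,j). f (r i, r j))) = signof r * det ?M1"
    using det_permute_rows[OF c1 r] by simp
  also have "det ?M1 = det (transpose_mat ?M1)" using det_transpose[OF c1] by simp
  also have "transpose_mat ?M1 = mat n n (\<lambda>(i,j). ?Mt $$ (r i, j))"
    by (rule eq_matI) (auto simp: rin)
  also have "det \<dots> = signof r * det ?Mt"
    by (rule det_permute_rows[OF _ r]) simp
  also have "det ?Mt = det (mat n n f)" by (rule det_transpose[of _ n]) simp
  finally show ?thesis by (simp add: sign_def)
qed

lemma G_rev: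
  assumes x: "\<forall>i<J. x i > 0"
  shows "Gf J se2 sg2 rho (\<lambda>i. x (J - 1 - i)) = Gf J se2 sg2 rho x"
proof -
  let ?y = "\<lambda>i. x (J - 1 - i)"
  have y: "\<forall>i<J. ?y i > 0" using x by auto
  let ?F = "\<lambda>(i,j). (if i = j then se2 else 0) + sqrt (x i) * sqrt (x j) * (sg2 * rho ^ (if i \<le> j then j - i else i - j))"
  have ex: "(if J - 1 - i \<le> J - 1 - j then (J - 1 - j) - (J - 1 - i) else (J - 1 - i) - (J - 1 - j))
      = (if i \<le> j then j - i else i - j)" if "i < J" "j < J" for i j :: nat
    using that by auto
  have "Bm J se2 sg2 rho ?y = mat J J (\<lambda>(i,j). ?F (rv J i, rv J j))"
    by (rule eq_matI) (auto simp: Bm_def rv_def ex)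
  then have dB: "det (Bm J se2 sg2 rho ?y) = det (Bm J se2 sg2 rho x)"
    using det_rev[OF rv_permutes, of J ?F] by (simp add: Bm_def)
  have "(\<Prod>i=0..<J. ?y i) = (\<Prod>i=0..<J. (x \<circ> rv J) i)"
    by (rule prod.cong) (auto simp: rv_def)
  also have "\<dots> = (\<Prod>i=0..<J. x i)" by (rule prod.permute[OF rv_permutes, symmetric])
  finally have pe: "(\<Prod>i=0..<J. ?y i) = (\<Prod>i=0..<J. x i)" .
  have p0: "(\<Prod>i=0..<J. x i) > 0" using x by (intro prod_pos) auto
  have "(\<Prod>i=0..<J. x i) * Gf J se2 sg2 rho ?y = (\<Prod>i=0..<J. x i) * Gf J se2 sg2 rho x"
    using dB unfolding detB_G[OF y, of se2 sg2 rho] detB_G[OF x, of se2 sg2 rho] pe .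
  moreover have "(\<Prod>i=0..<J. x i) \<noteq> 0" using p0 by linarith
  ultimately show ?thesis by (metis mult_left_cancel)
qed


lemma diag_mv:
  assumes "w \<in> carrier_vec J" "i < J"
  shows "(diag_design J z *\<^sub>v w) $ i = z i * w $ i"
proof -
  have "(diag_design J z *\<^sub>v w) $ i = (\<Sum>j=0..<J. (if i = j then z i else 0) * w $ j)"
    using assms by (simp add: diag_design_def scalar_prod_def)
  also have "\<dots> = (\<Sum>j=0..<J. if j = i then z i * w $ i else 0)" by (rule sum.cong) auto
  finally show ?thesis using assms by simp
qed

lemma pos_of_estimable:
  assumes A: "A \<in> carrier_mat J J" and dA: "det A \<noteq> 0"
    and es: "estimable J A z" and ad: "approx_design J I z"
  shows "\<forall>i<J. z i > 0"
proof (intro allI impI)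
  fix i assume i: "i < J"
  have z0: "z i \<ge> 0" using ad i unfolding approx_design_def by auto
  show "z i > 0"
  proof (rule ccontr)
    assume "\<not> z i > 0"
    then have zi: "z i = 0" using z0 by simp
    have Aik: "A $$ (i,k) = 0" if k: "k < J" for k
    proof -
      obtain w where w: "w \<in> carrier_vec J" "col A k = diag_design J z *\<^sub>v w"
        using es k A unfolding estimable_def by auto
      have "A $$ (i,k) = col A k $ i" using A i k by simp
      also have "\<dots> = z i * w $ i" using w diag_mv[OF w(1) i] by simp
      finally show ?thesis using zi by simp
    qed
    have cAt: "transpose_mat A \<in> carrier_mat J J" using A by simp
    have "transpose_mat A *\<^sub>v unit_vec J i = 0\<^sub>v J"
    proof (rule eq_vecI)
      fix k assume "k < dim_vec (0\<^sub>v J :: real vec)"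
      then have k: "k < J" by simp
      have "(transpose_mat A *\<^sub>v unit_vec J i) $ k = row (transpose_mat A) k \<bullet> unit_vec J i"
        using k A by simp
      also have "\<dots> = row (transpose_mat A) k $ i"
        by (rule scalar_prod_right_unit) (use A i in auto)
      also have "\<dots> = A $$ (i,k)" using A i k by simp
      finally show "(transpose_mat A *\<^sub>v unit_vec J i) $ k = (0\<^sub>v J :: real vec) $ k" using Aik k by simp
    qed (use A in simp)
    moreover have "unit_vec J i \<noteq> (0\<^sub>v J :: real vec)"
    proof
      assume "unit_vec J i = (0\<^sub>v J :: real vec)"
      then have "unit_vec J i $ i = (0\<^sub>v J :: real vec) $ i" by simp
      then show False using i by simp
    qed
    moreover have "unit_vec J i \<in> carrier_vec J" by simp
    ultimately have "det (transpose_mat A) = 0"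
      using det_0_iff_vec_prod_zero[OF cAt] by blast
    then show False using dA det_transpose[OF A] by simp
  qed
qed

lemma admissible:
  assumes A: "A \<in> carrier_mat J J" and dA: "det A \<noteq> 0"
    and z: "\<forall>i<J. z i > 0" and s: "(\<Sum>j<J. z j) = I"
  shows "approx_design J I z \<and> estimable J A z"
proof
  show "approx_design J I z" using z s unfolding approx_design_def by auto
  have inj: "\<forall>v\<in>carrier_vec (dim_col A). A *\<^sub>v v = 0\<^sub>v (dim_row A) \<longrightarrow> v = 0\<^sub>v (dim_col A)"
    using det_0_iff_vec_prod_zero[OF A] dA A by auto
  have cols: "\<forall>k < dim_col A. \<exists>w \<in> carrier_vec J. col A k = diag_design J z *\<^sub>v w"
  proof (intro allI impI)
    fix k assume k: "k < dim_col A"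
    define w where "w = vec J (\<lambda>j. A $$ (j,k) / z j)"
    have w: "w \<in> carrier_vec J" unfolding w_def by simp
    have "col A k = diag_design J z *\<^sub>v w"
    proof (rule eq_vecI)
      fix i assume "i < dim_vec (diag_design J z *\<^sub>v w)"
      then have i: "i < J" by (simp add: diag_design_def)
      have "(diag_design J z *\<^sub>v w) $ i = z i * (A $$ (i,k) / z i)"
        using diag_mv[OF w i] i unfolding w_def by simp
      also have "\<dots> = A $$ (i,k)"
      proof -
        have zi: "z i \<noteq> 0" using z i by (metis less_irrefl)
        then show ?thesis by simp
      qed
      finally show "col A k $ i = (diag_design J z *\<^sub>v w) $ i" using A i k by simp
    qed (use A in \<open>simp add: diag_design_def\<close>)
    then show "\<exists>w \<in> carrier_vec J. col A k = diag_design J z *\<^sub>v w" using w by blast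
  qed
  show "estimable J A z" unfolding estimable_def using inj cols by blast
qed

lemma det_info_G:
  assumes A: "A \<in> carrier_mat J J" and z: "\<forall>i<J. z i > 0"
    and "0 \<le> rho" "rho \<le> 1" "0 \<le> sg2" "se2 > 0"
  shows "det (info_mat J se2 (ar_cov J sg2 rho) A z) = det A ^ 2 / Gf J se2 sg2 rho z"
proof -
  have G: "Gf J se2 sg2 rho z > 0" using G_pos assms by blast
  have p0: "(\<Prod>i=0..<J. z i) > 0" using z by (intro prod_pos) auto
  have dB: "det (Bm J se2 sg2 rho z) = (\<Prod>i=0..<J. z i) * Gf J se2 sg2 rho z" by (rule detB_G[OF z])
  have "det (Bm J se2 sg2 rho z) > 0" unfolding dB using p0 G by (rule mult_pos_pos)
  then have dB0: "det (Bm J se2 sg2 rho z) \<noteq> 0" by linarith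
  have sq: "(\<Prod>i=0..<J. sqrt (z i)) ^ 2 = (\<Prod>i=0..<J. z i)"
    unfolding prod_power_distrib using z by (intro prod.cong refl) auto
  have pne: "(\<Prod>i=0..<J. z i) \<noteq> 0" using p0 by linarith
  show ?thesis unfolding det_info[OF A dB0] sq dB
    by (simp only: mult.commute[of "det A ^ 2"] mult_divide_mult_cancel_left[OF pne])
qed

theorem lemma5:
  fixes J :: nat and se2 sg2 rho I :: real and A :: "real mat" and xi :: "nat \<Rightarrow> real"
  assumes "J \<ge> 1"
    and "se2 > 0" and "sg2 > 0" and "0 \<le> rho" and "rho \<le> 1"
    and "A \<in> carrier_mat J J" and "det A \<noteq> 0"
    and "I > 0"
    and "D_optimal J I se2 (ar_cov J sg2 rho) A xi"
  shows "\<forall>j<J. xi j = xi (J - 1 - j)"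
proof (rule ccontr)
  note A = assms(6) and dA = assms(7)
  have par: "0 \<le> rho" "rho \<le> 1" "0 \<le> sg2" "se2 > 0" using assms by auto
  from assms(9) have ad: "approx_design J I xi" and es: "estimable J A xi"
    and opt: "\<And>xi'. approx_design J I xi' \<and> estimable J A xi' \<Longrightarrow>
        ln (det (info_mat J se2 (ar_cov J sg2 rho) A xi)) \<ge> ln (det (info_mat J se2 (ar_cov J sg2 rho) A xi'))"
    unfolding D_optimal_def by auto
  have x: "\<forall>i<J. xi i > 0" by (rule pos_of_estimable[OF A dA es ad])
  define y where "y i = xi (J - 1 - i)" for i
  define m where "m i = (xi i + y i) / 2" for i
  assume "\<not> (\<forall>j<J. xi j = xi (J - 1 - j))"
  then have ne: "\<exists>i<J. xi i \<noteq> y i" unfolding y_def by auto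
  have y: "\<forall>i<J. y i > 0" using x unfolding y_def by auto
  have mpos: "\<forall>i<J. m i > 0" using x y unfolding m_def by (auto intro: add_pos_pos)
  have sx: "(\<Sum>j<J. xi j) = I" using ad unfolding approx_design_def by auto
  have "(\<Sum>j<J. y j) = (\<Sum>j=0..<J. (xi \<circ> rv J) j)"
    unfolding lessThan_atLeast0 by (rule sum.cong) (auto simp: rv_def y_def)
  also have "\<dots> = (\<Sum>j=0..<J. xi j)" by (rule sum.permute[OF rv_permutes, symmetric])
  finally have sy: "(\<Sum>j<J. y j) = I" using sx by (simp add: lessThan_atLeast0)
  have sm: "(\<Sum>j<J. m j) = I" unfolding m_def using sx sy
    by (simp add: sum_divide_distrib[symmetric] sum.distrib)
  have "ln (det (info_mat J se2 (ar_cov J sg2 rho) A xi)) \<ge> ln (det (info_mat J se2 (ar_cov J sg2 rho) A m))"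
    using opt admissible[OF A dA mpos sm] by blast
  moreover have Gx: "Gf J se2 sg2 rho xi > 0" using G_pos par x by blast
  moreover have Gm: "Gf J se2 sg2 rho m > 0" using G_pos par mpos by blast
  moreover have dA2: "det A ^ 2 > 0" using dA by simp
  ultimately have le: "det A ^ 2 / Gf J se2 sg2 rho m \<le> det A ^ 2 / Gf J se2 sg2 rho xi"
    unfolding det_info_G[OF A x par] det_info_G[OF A mpos par] by simp
  have "Gf J se2 sg2 rho m < (Gf J se2 sg2 rho xi + Gf J se2 sg2 rho y) / 2"
    unfolding m_def by (rule G_convex[OF par x y ne])
  also have "Gf J se2 sg2 rho y = Gf J se2 sg2 rho xi" unfolding y_def by (rule G_rev[OF x])
  finally have "Gf J se2 sg2 rho m < Gf J se2 sg2 rho xi" by simp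
  then have "det A ^ 2 / Gf J se2 sg2 rho xi < det A ^ 2 / Gf J se2 sg2 rho m"
    using Gm dA2 by (intro divide_strict_left_mono) auto
  with le show False by simp
qed

end
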